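(* Let $\mathcal{H}$ be a real Hilbert space, let $A\colon \mathcal{H}\rightrightarrows\mathcal{H}$ be maximally monotone, let $B\colon \mathcal{H}\to\mathcal{H}$ be monotone and $L_1$-Lipschitz, and let $C\colon \mathcal{H}\to\mathcal{H}$ be $1/L_2$-cocoercive. Suppose that $(A+B+C)^{-1}(0)\neq\varnothing$ and $\lambda\in\left(0,\frac{2}{4L_1+L_2}\right)$. Given $x_0,x_{-1}\in\mathcal{H}$, define the sequence $(x_k)$ by $$x_{k+1} = J_{\lambda A}\bigl(x_k - 2\lambda B(x_k) + \lambda B(x_{k-1}) -\lambda C(x_k) \bigr) \quad\forall k\in\mathbb{N}.$$ Then $(x_k)$ converges weakly to a point contained in $(A+B+C)^{-1}(0)$.
   Context: $J_{\lambda A}:=(I+\lambda A)^{-1}$ is the resolvent. $C$ is $1/L_2$-cocoercive if $\langle x-y,C(x)-C(y)\rangle\geq \frac{1}{L_2}\|C(x)-C(y)\|^2$ for all $x,y\in\mathcal{H}$. *)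

theory Defs
  imports "HOL-Analysis.Analysis"
begin

text \<open>Set-valued operators on a real Hilbert space are modelled as functions
  'a \<Rightarrow> 'a set (A x is the image set of x); the graph is {(x,u). u \<in> A x}.\<close>

definition monotone_op :: "('a::real_inner \<Rightarrow> 'a set) \<Rightarrow> bool" where
  "monotone_op A \<longleftrightarrow>
     (\<forall>x y u v. u \<in> A x \<longrightarrow> v \<in> A y \<longrightarrow> inner (x - y) (u - v) \<ge> 0)"

definition maximally_monotone :: "('a::real_inner \<Rightarrow> 'a set) \<Rightarrow> bool" where
  "maximally_monotone A \<longleftrightarrow> monotone_op A \<and>
     (\<forall>A'. monotone_op A' \<and> (\<forall>x. A x \<subseteq> A' x) \<longrightarrow> A' = A)"

definition monotone_fun :: "('a::real_inner \<Rightarrow> 'a) \<Rightarrow> bool" where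
  "monotone_fun B \<longleftrightarrow> (\<forall>x y. inner (x - y) (B x - B y) \<ge> 0)"

definition cocoercive :: "real \<Rightarrow> ('a::real_inner \<Rightarrow> 'a) \<Rightarrow> bool" where
  "cocoercive L C \<longleftrightarrow> L > 0 \<and>
     (\<forall>x y. inner (x - y) (C x - C y) \<ge> (1 / L) * (norm (C x - C y))\<^sup>2)"

text \<open>Resolvent J_{\<lambda>A} = (I + \<lambda>A)^{-1}, as the (set-valued) inverse relation:
  p \<in> J z iff z \<in> p + \<lambda> A p.\<close>
definition resolvent :: "real \<Rightarrow> ('a::real_inner \<Rightarrow> 'a set) \<Rightarrow> 'a \<Rightarrow> 'a set" where
  "resolvent lam A z = {p. \<exists>a \<in> A p. z = p + lam *\<^sub>R a}"

definition zeros3 :: "('a::real_inner \<Rightarrow> 'a set) \<Rightarrow> ('a \<Rightarrow> 'a) \<Rightarrow> ('a \<Rightarrow> 'a) \<Rightarrow> 'a set" where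
  "zeros3 A B C = {z. \<exists>a \<in> A z. a + B z + C z = 0}"

definition weakly_converges :: "(nat \<Rightarrow> 'a::real_inner) \<Rightarrow> 'a \<Rightarrow> bool" where
  "weakly_converges x p \<longleftrightarrow> (\<forall>y. (\<lambda>k. inner (x k) y) \<longlonglongrightarrow> inner p y)"

end

theory Submission
  imports Defs "HOL-Library.Diagonal_Subsequence"
begin


lemma parallelogram:
  fixes a b :: "'a::real_inner"
  shows "(norm (a + b))\<^sup>2 + (norm (a - b))\<^sup>2 = 2 * (norm a)\<^sup>2 + 2 * (norm b)\<^sup>2"
  by (simp add: power2_norm_eq_inner inner_simps algebra_simps)

lemma proj_exists:
  fixes K :: "'a::{real_inner,complete_space} set"
  assumes cl: "closed K" and sub: "subspace K"
  shows "\<exists>q\<in>K. \<forall>k\<in>K. norm (y - q) \<le> norm (y - k)"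
proof -
  define \<delta> where "\<delta> = Inf ((\<lambda>k. norm (y - k)) ` K)"
  have K0: "0 \<in> K" using sub by (simp add: subspace_def)
  have bdd: "bdd_below ((\<lambda>k. norm (y - k)) ` K)" by (rule bdd_belowI[of _ 0]) auto
  have lek: "\<delta> \<le> norm (y - k)" if "k \<in> K" for k
    unfolding \<delta>_def using bdd that by (auto intro: cInf_lower)
  have d0: "0 \<le> \<delta>" unfolding \<delta>_def using K0 by (auto intro!: cInf_greatest)
  have "\<forall>n. \<exists>k\<in>K. norm (y - k) < \<delta> + 1 / (Suc n)"
  proof
    fix n
    have "Inf ((\<lambda>k. norm (y - k)) ` K) < \<delta> + 1 / (Suc n)" unfolding \<delta>_def by simp
    then show "\<exists>k\<in>K. norm (y - k) < \<delta> + 1 / (Suc n)"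
      using K0 by (subst (asm) cInf_less_iff) (auto simp: bdd)
  qed
  then obtain ks where ks: "\<And>n. ks n \<in> K" "\<And>n. norm (y - ks n) < \<delta> + 1 / (Suc n)"
    by metis
  have sq: "(norm (y - ks n))\<^sup>2 \<le> \<delta>\<^sup>2 + (2*\<delta>+1) / (Suc n)" for n
  proof -
    have "(norm (y - ks n))\<^sup>2 \<le> (\<delta> + 1 / (Suc n))\<^sup>2"
      using ks(2)[of n] by (intro power_mono) auto
    also have "\<dots> = \<delta>\<^sup>2 + (2*\<delta>) * (1 / Suc n) + (1 / Suc n)^2"
      by (simp add: power2_sum)
    also have "(1 / Suc n)^2 \<le> 1 / (Suc n :: real)"
    proof -
      have "(1 / Suc n) * (1 / Suc n) \<le> (1 / Suc n) * (1::real)"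
        by (rule mult_left_mono) auto
      then show ?thesis by (simp add: power2_eq_square)
    qed
    finally show ?thesis by (simp add: add_divide_distrib)
  qed
  have dist: "(norm (ks n - ks m))\<^sup>2 \<le> 2*(2*\<delta>+1) * (1 / Suc n + 1 / Suc m)" for n m
  proof -
    have mid: "(1/2) *\<^sub>R (ks n + ks m) \<in> K"
      using sub ks(1) by (simp add: subspace_def)
    have "\<delta> \<le> norm (y - (1/2) *\<^sub>R (ks n + ks m))" by (rule lek[OF mid])
    hence "\<delta>\<^sup>2 \<le> (norm (y - (1/2) *\<^sub>R (ks n + ks m)))\<^sup>2" using d0 by (intro power_mono) auto
    also have "(norm (y - (1/2) *\<^sub>R (ks n + ks m)))\<^sup>2 = (norm ((y - ks n) + (y - ks m)))\<^sup>2 / 4"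
    proof -
      have "(y - ks n) + (y - ks m) = 2 *\<^sub>R (y - (1/2) *\<^sub>R (ks n + ks m))"
        by (simp add: algebra_simps scaleR_2)
      then show ?thesis by (simp add: power_mult_distrib)
    qed
    finally have "4 * \<delta>\<^sup>2 \<le> (norm ((y - ks n) + (y - ks m)))\<^sup>2" by simp
    moreover have "(norm ((y - ks n) + (y - ks m)))\<^sup>2 + (norm ((y - ks n) - (y - ks m)))\<^sup>2
        = 2 * (norm (y - ks n))\<^sup>2 + 2 * (norm (y - ks m))\<^sup>2" by (rule parallelogram)
    moreover have "(norm ((y - ks n) - (y - ks m)))\<^sup>2 = (norm (ks n - ks m))\<^sup>2"
      by (metis diff_diff_eq2 diff_add_cancel add_diff_cancel_left norm_minus_commute)
    moreover have "2*(2*\<delta>+1) * (1/Suc n + 1/Suc m) = 2*((2*\<delta>+1)/Suc n) + 2*((2*\<delta>+1)/Suc m)"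
      by (simp add: field_simps)
    ultimately show ?thesis using sq[of n] sq[of m] by linarith
  qed
  have "Cauchy ks"
  proof (rule CauchyI)
    fix e :: real assume e: "0 < e"
    obtain N :: nat where N: "4*(2*\<delta>+1) / e\<^sup>2 < N" using reals_Archimedean2 by blast
    show "\<exists>M. \<forall>m\<ge>M. \<forall>n\<ge>M. norm (ks m - ks n) < e"
    proof (intro exI allI impI)
      fix m n assume mn: "N \<le> m" "N \<le> n"
      have "1 / real (Suc m) \<le> 1 / Suc N" "1 / real (Suc n) \<le> 1 / Suc N"
        using mn by (auto intro!: divide_left_mono)
      hence "1 / real (Suc m) + 1 / real (Suc n) \<le> 2 / Suc N" by simp
      hence "2*(2*\<delta>+1) * (1 / real (Suc m) + 1 / real (Suc n)) \<le> 2*(2*\<delta>+1) * (2 / Suc N)"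
        using d0 by (intro mult_left_mono) auto
      hence "(norm (ks m - ks n))\<^sup>2 \<le> 2*(2*\<delta>+1) * (2 / Suc N)"
        using dist[of m n] by linarith
      also have "\<dots> < e\<^sup>2"
      proof -
        have "4*(2*\<delta>+1) < e\<^sup>2 * N" using N e by (simp add: field_simps)
        also have "\<dots> \<le> e\<^sup>2 * Suc N" using e by simp
        finally show ?thesis by (simp add: field_simps)
      qed
      finally show "norm (ks m - ks n) < e" using e by (simp add: power_less_imp_less_base)
    qed
  qed
  then obtain q where q: "ks \<longlonglongrightarrow> q" using Cauchy_convergent_iff convergent_def by blast
  have qK: "q \<in> K" using cl ks(1) q closed_sequentially by blast
  have "(\<lambda>n. norm (y - ks n)) \<longlonglongrightarrow> norm (y - q)" by (intro tendsto_intros q)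
  moreover have "(\<lambda>n. \<delta> + 1 / Suc n) \<longlonglongrightarrow> \<delta> + 0"
    by (intro tendsto_intros LIMSEQ_Suc[OF lim_inverse_n'])
  ultimately have "norm (y - q) \<le> \<delta>"
    using ks(2) by (intro tendsto_le[OF _ _ _ always_eventually]) (auto intro: less_imp_le)
  then show ?thesis using qK lek by force
qed

lemma proj_orth:
  fixes K :: "'a::{real_inner,complete_space} set"
  assumes cl: "closed K" and sub: "subspace K"
  shows "\<exists>q\<in>K. \<forall>k\<in>K. inner (y - q) k = 0"
proof -
  obtain q where qK: "q \<in> K" and qmin: "\<And>k. k \<in> K \<Longrightarrow> norm (y - q) \<le> norm (y - k)"
    using proj_exists[OF cl sub] by blast
  have "inner (y - q) k = 0" if k: "k \<in> K" for k
  proof (rule ccontr)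
    define c where "c = inner (y - q) k"
    define s where "s = inner k k"
    assume "inner (y - q) k \<noteq> 0"
    hence c0: "c \<noteq> 0" by (simp add: c_def)
    have s0: "s \<ge> 0" by (simp add: s_def)
    define t where "t = c / (s + 1)"
    have "q + t *\<^sub>R k \<in> K" using sub qK k by (simp add: subspace_def)
    hence "norm (y - q) \<le> norm ((y - q) - t *\<^sub>R k)" using qmin by (simp add: algebra_simps)
    hence "(norm (y - q))\<^sup>2 \<le> (norm ((y - q) - t *\<^sub>R k))\<^sup>2" by (simp add: power_mono)
    hence "0 \<le> t * t * s - 2 * t * c"
      by (simp add: power2_norm_eq_inner inner_simps c_def s_def inner_commute algebra_simps)
    moreover have "t * t * s - 2 * t * c = c * c * (s - 2 * (s + 1)) / (s + 1)^2"
    proof -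
      have sp: "s + 1 \<noteq> 0" using s0 by simp
      show ?thesis unfolding t_def using sp by (simp add: divide_simps power2_eq_square) (simp add: algebra_simps)
    qed
    ultimately have "0 \<le> c * c * (s - 2 * (s + 1)) / (s + 1)^2" by simp
    have "c * c * (s - 2 * (s + 1)) < 0"
    proof -
      have "c * c > 0" using c0 by (auto simp: zero_less_mult_iff)
      moreover have "s - 2 * (s + 1) < 0" using s0 by simp
      ultimately show ?thesis by (rule mult_pos_neg)
    qed
    moreover have "(s+1)^2 > 0" using s0 by simp
    ultimately have "c * c * (s - 2 * (s + 1)) / (s + 1)^2 < 0" by (intro divide_neg_pos)
    with \<open>0 \<le> c * c * (s - 2 * (s + 1)) / (s + 1)^2\<close> show False by linarith
  qed
  then show ?thesis using qK by blast
qed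



lemma riesz:
  fixes f :: "'a::{real_inner,complete_space} \<Rightarrow> real"
  assumes add: "\<And>a b. f (a + b) = f a + f b" and sc: "\<And>c a. f (c *\<^sub>R a) = c * f a"
    and bd: "\<And>a. \<bar>f a\<bar> \<le> M * norm a"
  shows "\<exists>p. \<forall>y. f y = inner p y"
proof -
  have bl: "bounded_linear f"
    by (rule bounded_linear_intro[where K=M]) (use add sc bd in \<open>auto simp: mult.commute\<close>)
  have f0: "f 0 = 0" using sc[of 0 0] by simp
  have fdiff: "f (a - b) = f a - f b" for a b
    using add[of a "(-1) *\<^sub>R b"] sc[of "-1" b] by simp
  show ?thesis
  proof (cases "\<forall>y. f y = 0")
    case True then show ?thesis by (intro exI[of _ 0]) simp
  next
    case False
    then obtain y0 where y0: "f y0 \<noteq> 0" by blast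
    define N where "N = {y. f y = 0}"
    have clN: "closed N" unfolding N_def
      by (rule closed_Collect_eq[OF linear_continuous_on[OF bl] continuous_on_const])
    have subN: "subspace N" unfolding N_def subspace_def using f0 add sc by auto
    obtain q where qN: "q \<in> N" and orth: "\<And>k. k \<in> N \<Longrightarrow> inner (y0 - q) k = 0"
      using proj_orth[OF clN subN, of y0] by blast
    define w where "w = y0 - q"
    have fw: "f w = f y0" using qN fdiff by (simp add: w_def N_def)
    have ww: "inner w w \<noteq> 0" using fw y0 f0 by auto
    have key: "inner w y = (f y / f w) * inner w w" for y
    proof -
      have "y - (f y / f w) *\<^sub>R w \<in> N"
        using fw y0 by (simp add: N_def fdiff sc)
      hence "inner w (y - (f y / f w) *\<^sub>R w) = 0" using orth by (simp add: w_def)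
      thus ?thesis by (simp add: inner_diff_right)
    qed
    show ?thesis
    proof (intro exI allI)
      fix y
      have "inner ((f w / inner w w) *\<^sub>R w) y = (f w / inner w w) * inner w y" by simp
      also have "\<dots> = (f w / inner w w) * ((f y / f w) * inner w w)" using key[of y] by (rule arg_cong)
      also have "\<dots> = f y" using ww fw y0 by (simp add: field_simps)
      finally show "f y = inner ((f w / inner w w) *\<^sub>R w) y" by simp
    qed
  qed
qed

lemma weak_compact:
  fixes X :: "nat \<Rightarrow> 'a::{real_inner,complete_space}"
  assumes bd: "\<And>n. norm (X n) \<le> M"
  shows "\<exists>r p. strict_mono r \<and> weakly_converges (X \<circ> r) p"
proof -
  have M0: "0 \<le> M" using bd[of 0] norm_ge_zero order_trans by blast
  have ibd: "\<bar>inner (X n) y\<bar> \<le> M * norm y" for n y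
    using Cauchy_Schwarz_ineq2[of "X n" y] bd[of n] by (meson mult_right_mono norm_ge_zero order_trans)
  interpret S: subseqs "\<lambda>n s. convergent (\<lambda>j. inner (X (s j)) (X n))"
  proof
    fix n and s :: "nat \<Rightarrow> nat" assume "strict_mono s"
    have "bounded (range (\<lambda>j. inner (X (s j)) (X n)))"
      unfolding bounded_iff using ibd by auto
    then obtain l r' where "strict_mono r'" "((\<lambda>j. inner (X (s j)) (X n)) \<circ> r') \<longlonglongrightarrow> l"
      using bounded_imp_convergent_subsequence by blast
    then show "\<exists>r'. strict_mono r' \<and> convergent (\<lambda>j. inner (X ((s \<circ> r') j)) (X n))"
      by (auto simp: convergent_def o_def)
  qed
  define r where "r = S.diagseq"
  have r: "strict_mono r" unfolding r_def by (rule S.subseq_diagseq)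
  have convX: "convergent (\<lambda>j. inner (X (r j)) (X k))" for k
  proof -
    have "convergent (\<lambda>j. inner (X ((S.diagseq \<circ> (+) (Suc k)) j)) (X k))"
    proof (rule S.diagseq_holds)
      fix r s n assume "strict_mono (r::nat\<Rightarrow>nat)" "convergent (\<lambda>j. inner (X (s j)) (X n))"
      then show "convergent (\<lambda>j. inner (X ((s \<circ> r) j)) (X n))"
        using convergent_subseq_convergent[of "\<lambda>j. inner (X (s j)) (X n)" r] by (simp add: o_def)
    qed
    then obtain l where "(\<lambda>j. inner (X (r (j + Suc k))) (X k)) \<longlonglongrightarrow> l"
      by (auto simp: convergent_def o_def r_def add.commute)
    then have "(\<lambda>j. inner (X (r j)) (X k)) \<longlonglongrightarrow> l"
      using LIMSEQ_offset[of "\<lambda>j. inner (X (r j)) (X k)" "Suc k" l] by simp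
    then show ?thesis by (auto simp: convergent_def)
  qed
  define Conv where "Conv = {y. convergent (\<lambda>n. inner (X (r n)) y)}"
  have c0: "0 \<in> Conv" by (simp add: Conv_def convergent_const)
  have cadd: "a + b \<in> Conv" if "a \<in> Conv" "b \<in> Conv" for a b
    using that by (simp add: Conv_def inner_add_right convergent_add)
  have csc: "c *\<^sub>R a \<in> Conv" if "a \<in> Conv" for c a
    using that by (auto simp: Conv_def convergent_def intro: tendsto_mult_left)
  have subC: "subspace Conv" unfolding subspace_def using c0 cadd csc by blast
  have clC: "closed Conv"
    unfolding closed_sequential_limits
  proof (intro allI impI, elim conjE)
    fix ys y assume ysC: "\<forall>n. ys n \<in> Conv" and ysl: "ys \<longlonglongrightarrow> y"
    have "Cauchy (\<lambda>n. inner (X (r n)) y)"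
    proof (rule CauchyI)
      fix e :: real assume e: "0 < e"
      have "e / (4 * (M + 1)) > 0" using e M0 by simp
      then obtain j0 where "\<forall>n\<ge>j0. norm (ys n - y) < e / (4 * (M + 1))"
        using LIMSEQ_D[OF ysl] by blast
      then have j: "norm (ys j0 - y) < e / (4 * (M + 1))" by simp
      define j where "j = j0"
      note j = j[folded j_def]
      have cj: "Cauchy (\<lambda>n. inner (X (r n)) (ys j))"
        using ysC by (simp add: Conv_def Cauchy_convergent_iff)
      have "e / 2 > 0" using e by simp
      from CauchyD[OF cj this] obtain N where
        N0: "\<forall>m\<ge>N. \<forall>n\<ge>N. norm (inner (X (r m)) (ys j) - inner (X (r n)) (ys j)) < e / 2"
        by blast
      have N: "norm (inner (X (r m)) (ys j) - inner (X (r n)) (ys j)) < e / 2"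
        if "m \<ge> N" "n \<ge> N" for m n using N0 that by blast
      show "\<exists>N. \<forall>m\<ge>N. \<forall>n\<ge>N. norm (inner (X (r m)) y - inner (X (r n)) y) < e"
      proof (intro exI allI impI)
        fix m n assume mn: "m \<ge> N" "n \<ge> N"
        have eq: "inner (X (r m)) y - inner (X (r n)) y
            = (inner (X (r m)) (ys j) - inner (X (r n)) (ys j)) - inner (X (r m) - X (r n)) (ys j - y)"
          by (simp add: inner_diff_left inner_diff_right)
        have "\<bar>inner (X (r m) - X (r n)) (ys j - y)\<bar> \<le> norm (X (r m) - X (r n)) * norm (ys j - y)"
          by (rule Cauchy_Schwarz_ineq2)
        also have "\<dots> \<le> (2 * M) * norm (ys j - y)"
        proof (rule mult_right_mono)
          show "norm (X (r m) - X (r n)) \<le> 2 * M"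
            using norm_triangle_ineq4[of "X (r m)" "X (r n)"] bd[of "r m"] bd[of "r n"] by linarith
        qed simp
        also have "\<dots> \<le> (2 * M) * (e / (4 * (M + 1)))"
          using j M0 by (intro mult_left_mono) auto
        also have "\<dots> < e / 2"
          using e M0 by (simp add: field_simps)
        finally have "\<bar>inner (X (r m) - X (r n)) (ys j - y)\<bar> < e / 2" .
        then show "norm (inner (X (r m)) y - inner (X (r n)) y) < e"
          using N[OF mn] abs_triangle_ineq4[of "inner (X (r m)) (ys j) - inner (X (r n)) (ys j)" "inner (X (r m) - X (r n)) (ys j - y)"] unfolding eq real_norm_def by linarith
      qed
    qed
    then show "y \<in> Conv" by (simp add: Conv_def Cauchy_convergent_iff)
  qed
  have allC: "y \<in> Conv" for y
  proof -
    obtain q where qC: "q \<in> Conv" and orth: "\<And>k. k \<in> Conv \<Longrightarrow> inner (y - q) k = 0"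
      using proj_orth[OF clC subC, of y] by blast
    have XC: "X m \<in> Conv" for m using convX by (simp add: Conv_def)
    have o2: "inner (X m) (y - q) = 0" for m using orth[OF XC, of m] inner_commute by metis
    have "y - q \<in> Conv"
      by (simp add: Conv_def o2 convergent_const)
    then have "q + (y - q) \<in> Conv" using qC cadd by blast
    then show ?thesis by simp
  qed
  define f where "f y = lim (\<lambda>n. inner (X (r n)) y)" for y
  have flim: "(\<lambda>n. inner (X (r n)) y) \<longlonglongrightarrow> f y" for y
    using allC[of y] by (simp add: Conv_def f_def convergent_LIMSEQ_iff)
  have "\<exists>p. \<forall>y. f y = inner p y"
  proof (rule riesz)
    fix a b
    have "(\<lambda>n. inner (X (r n)) (a + b)) \<longlonglongrightarrow> f a + f b"
      using tendsto_add[OF flim[of a] flim[of b]] by (simp add: inner_add_right)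
    then show "f (a + b) = f a + f b" using flim LIMSEQ_unique by blast
  next
    fix c a
    have "(\<lambda>n. inner (X (r n)) (c *\<^sub>R a)) \<longlonglongrightarrow> c * f a"
      using tendsto_mult_left[OF flim[of a], of c] by simp
    then show "f (c *\<^sub>R a) = c * f a" using flim LIMSEQ_unique by blast
  next
    fix a
    show "\<bar>f a\<bar> \<le> M * norm a"
      using Lim_bounded[OF tendsto_rabs[OF flim[of a]], of 0 "M * norm a"] ibd by blast
  qed
  then obtain p where p: "\<And>y. f y = inner p y" by blast
  have "weakly_converges (X \<circ> r) p"
    unfolding weakly_converges_def using flim p by (simp add: o_def)
  then show ?thesis using r by blast
qed

lemma weakly_converges_subseq:
  assumes "weakly_converges X p" "strict_mono r"
  shows "weakly_converges (X \<circ> r) p"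
  unfolding weakly_converges_def
proof
  fix y
  have "((\<lambda>k. inner (X k) y) \<circ> r) \<longlonglongrightarrow> inner p y"
    using assms LIMSEQ_subseq_LIMSEQ unfolding weakly_converges_def by blast
  then show "(\<lambda>k. inner ((X \<circ> r) k) y) \<longlonglongrightarrow> inner p y" by (simp add: o_def)
qed



lemma young_ab:
  fixes c d L :: real
  assumes "0 < L"
  shows "d * c \<le> c\<^sup>2 / L + L / 4 * d\<^sup>2"
proof -
  have "0 \<le> (2 * c - L * d)\<^sup>2" by simp
  hence "4 * L * (d * c) \<le> 4 * c\<^sup>2 + L\<^sup>2 * d\<^sup>2" by (simp add: power2_eq_square algebra_simps)
  hence h: "d * c * (4 * L) \<le> 4 * c\<^sup>2 + L\<^sup>2 * d\<^sup>2" by (simp add: algebra_simps)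
  have eq: "c\<^sup>2 / L + L / 4 * d\<^sup>2 = (4 * c\<^sup>2 + L\<^sup>2 * d\<^sup>2) / (4 * L)"
    using assms by (simp add: field_simps power2_eq_square)
  have "d * c \<le> (4 * c\<^sup>2 + L\<^sup>2 * d\<^sup>2) / (4 * L)"
    using h assms by (subst pos_le_divide_eq) auto
  thus ?thesis using eq by simp
qed

lemma key_ineq:
  fixes u0 u1 u2 z a az bu0 bu1 bu2 bz cu1 cz :: "'a::real_inner"
  assumes monoA: "inner (u2 - z) (a - az) \<ge> 0"
    and rec: "u1 - (2*lam) *\<^sub>R bu1 + lam *\<^sub>R bu0 - lam *\<^sub>R cu1 = u2 + lam *\<^sub>R a"
    and zero: "az + bz + cz = 0"
    and monoB: "inner (u2 - z) (bu2 - bz) \<ge> 0"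
    and lip: "norm (bu1 - bu0) \<le> L1 * norm (u1 - u0)"
    and coco: "inner (u1 - z) (cu1 - cz) \<ge> (1/L2) * (norm (cu1 - cz))\<^sup>2"
    and lam: "0 < lam" and L2: "0 < L2" and L1: "0 \<le> L1"
  shows "(1/2)*(norm (u2-z))\<^sup>2 - lam * inner (u2 - z) (bu2 - bu1) + lam*L1/2*(norm (u2-u1))\<^sup>2
     \<le> (1/2)*(norm (u1-z))\<^sup>2 - lam * inner (u1 - z) (bu1 - bu0) + lam*L1/2*(norm (u1-u0))\<^sup>2
        - (1/2 - lam*L1 - lam*L2/4)*(norm (u2-u1))\<^sup>2"
proof -
  define T1 where "T1 = inner (u2 - z) (u1 - u2)"
  define T2 where "T2 = inner (u2 - z) (bz - 2 *\<^sub>R bu1 + bu0)"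
  define T3 where "T3 = inner (u2 - z) (cz - cu1)"
  have az: "az = - bz - cz" using zero by (simp add: algebra_simps eq_neg_iff_add_eq_0)
  have la: "lam *\<^sub>R a = u1 - u2 - (2*lam) *\<^sub>R bu1 + lam *\<^sub>R bu0 - lam *\<^sub>R cu1"
    using rec by (simp add: algebra_simps)
  have v: "lam *\<^sub>R (a - az) = (u1 - u2) + lam *\<^sub>R (bz - 2 *\<^sub>R bu1 + bu0) + lam *\<^sub>R (cz - cu1)"
  proof -
    have "lam *\<^sub>R (a - az) = lam *\<^sub>R a - lam *\<^sub>R az" by (simp add: scaleR_diff_right)
    also have "\<dots> = (u1 - u2 - (2*lam) *\<^sub>R bu1 + lam *\<^sub>R bu0 - lam *\<^sub>R cu1) - lam *\<^sub>R (- bz - cz)"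
      by (simp only: la az)
    also have "\<dots> = (u1 - u2) + lam *\<^sub>R (bz - 2 *\<^sub>R bu1 + bu0) + lam *\<^sub>R (cz - cu1)"
    proof -
      have t: "(2*lam) *\<^sub>R bu1 = lam *\<^sub>R bu1 + lam *\<^sub>R bu1"
        by (metis mult.commute scaleR_2 scaleR_scaleR scaleR_right_distrib)
      show ?thesis by (simp only: t) (simp add: algebra_simps scaleR_2)
    qed
    finally show ?thesis .
  qed
  have E0: "0 \<le> T1 + lam * T2 + lam * T3"
  proof -
    have "0 \<le> lam * inner (u2 - z) (a - az)" using monoA lam by simp
    also have "\<dots> = inner (u2 - z) (lam *\<^sub>R (a - az))" by simp
    also have "\<dots> = T1 + lam * T2 + lam * T3"
      unfolding v T1_def T2_def T3_def by (simp add: inner_add_right)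
    finally show ?thesis .
  qed
  have I1: "T1 = (1/2) * ((norm (u1-z))\<^sup>2 - (norm (u2-z))\<^sup>2 - (norm (u2-u1))\<^sup>2)"
    unfolding T1_def by (simp add: power2_norm_eq_inner inner_simps inner_commute algebra_simps)
  have I2: "T2 = - inner (u2 - z) (bu2 - bz) + inner (u2 - z) (bu2 - bu1)
      - inner (u1 - z) (bu1 - bu0) - inner (u2 - u1) (bu1 - bu0)"
    unfolding T2_def by (simp add: inner_simps inner_commute algebra_simps scaleR_2)
  have I3: "T3 = - inner (u1 - z) (cu1 - cz) - inner (u2 - u1) (cu1 - cz)"
    unfolding T3_def by (simp add: inner_simps inner_commute algebra_simps)
  have b1: "- inner (u2 - u1) (bu1 - bu0) \<le> L1/2 * ((norm (u2-u1))\<^sup>2 + (norm (u1-u0))\<^sup>2)"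
  proof -
    have "- inner (u2 - u1) (bu1 - bu0) \<le> norm (u2 - u1) * norm (bu1 - bu0)"
      using Cauchy_Schwarz_ineq2[of "u2 - u1" "bu1 - bu0"] by linarith
    also have "\<dots> \<le> norm (u2 - u1) * (L1 * norm (u1 - u0))"
      using lip by (simp add: mult_left_mono)
    also have "\<dots> = L1 * (norm (u2 - u1) * norm (u1 - u0))" by simp
    also have "\<dots> \<le> L1 * (1/2 * ((norm (u2-u1))\<^sup>2 + (norm (u1-u0))\<^sup>2))"
    proof (rule mult_left_mono[OF _ L1])
      have "0 \<le> (norm (u2 - u1) - norm (u1 - u0))\<^sup>2" by simp
      thus "norm (u2 - u1) * norm (u1 - u0) \<le> 1/2 * ((norm (u2-u1))\<^sup>2 + (norm (u1-u0))\<^sup>2)"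
        by (simp add: power2_eq_square algebra_simps)
    qed
    finally show ?thesis by simp
  qed
  have b2: "T3 \<le> L2/4 * (norm (u2-u1))\<^sup>2"
  proof -
    have "- inner (u2 - u1) (cu1 - cz) \<le> norm (u2 - u1) * norm (cu1 - cz)"
      using Cauchy_Schwarz_ineq2[of "u2 - u1" "cu1 - cz"] by linarith
    also have "\<dots> \<le> (norm (cu1 - cz))\<^sup>2 / L2 + L2 / 4 * (norm (u2 - u1))\<^sup>2"
      by (rule young_ab[OF L2])
    finally show ?thesis using coco unfolding I3 by simp
  qed
  have mB: "0 \<le> lam * inner (u2 - z) (bu2 - bz)" using monoB lam by simp
  have lb1: "- (lam * inner (u2 - u1) (bu1 - bu0)) \<le> lam * (L1/2 * ((norm (u2-u1))\<^sup>2 + (norm (u1-u0))\<^sup>2))"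
    using mult_left_mono[OF b1, of lam] lam by simp
  have lb2: "lam * T3 \<le> lam * (L2/4 * (norm (u2-u1))\<^sup>2)"
    using mult_left_mono[OF b2, of lam] lam by simp
  have lI2: "lam * T2 = - (lam * inner (u2 - z) (bu2 - bz)) + lam * inner (u2 - z) (bu2 - bu1)
      - lam * inner (u1 - z) (bu1 - bu0) - lam * inner (u2 - u1) (bu1 - bu0)"
    unfolding I2 by (simp add: algebra_simps)
  show ?thesis using E0 I1 lI2 mB lb1 lb2 by (simp add: algebra_simps)
qed



lemma inner_null:
  fixes a b :: "nat \<Rightarrow> 'a::real_inner"
  assumes bd: "\<And>n. norm (a n) \<le> M" and b: "b \<longlonglongrightarrow> 0"
  shows "(\<lambda>n. inner (a n) (b n)) \<longlonglongrightarrow> 0"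
proof (rule Lim_null_comparison)
  show "\<forall>\<^sub>F n in sequentially. norm (inner (a n) (b n)) \<le> M * norm (b n)"
  proof (rule always_eventually, rule allI)
    fix n
    have "norm (inner (a n) (b n)) \<le> norm (a n) * norm (b n)"
      using Cauchy_Schwarz_ineq2 by simp
    also have "\<dots> \<le> M * norm (b n)" using bd[of n] by (simp add: mult_right_mono)
    finally show "norm (inner (a n) (b n)) \<le> M * norm (b n)" .
  qed
  have "(\<lambda>n. norm (b n)) \<longlonglongrightarrow> 0" using b tendsto_norm_zero by blast
  then show "(\<lambda>n. M * norm (b n)) \<longlonglongrightarrow> 0" using tendsto_mult_right_zero by blast
qed

lemma wc_inner:
  assumes "weakly_converges zs p"
  shows "(\<lambda>n. inner (zs n) c) \<longlonglongrightarrow> inner p c"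
  using assms unfolding weakly_converges_def by blast

lemma wc_inner':
  assumes "weakly_converges zs p"
  shows "(\<lambda>n. inner c (zs n)) \<longlonglongrightarrow> inner c p"
  using wc_inner[OF assms, of c] by (simp add: inner_commute)

lemma demiclosed:
  fixes A :: "'a::{real_inner,complete_space} \<Rightarrow> 'a set" and D :: "'a \<Rightarrow> 'a"
  assumes maxA: "maximally_monotone A" and mD: "monotone_fun D"
    and lD: "\<And>u v. norm (D u - D v) \<le> LD * norm (u - v)" and LD: "0 \<le> LD"
    and gr: "\<And>n. us n - D (zs n) \<in> A (zs n)" and us: "us \<longlonglongrightarrow> 0"
    and bd: "\<And>n. norm (zs n) \<le> M"
    and wp: "weakly_converges zs p" and wd: "weakly_converges (\<lambda>n. D (zs n)) d"
  shows "- D p \<in> A p"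
proof -
  have monA: "monotone_op A" using maxA by (simp add: maximally_monotone_def)
  have M0: "0 \<le> M" using bd[of 0] norm_ge_zero order_trans by blast
  have K1: "inner (p - y) (- d - v) \<ge> 0" if vy: "v \<in> A y" for y v
  proof -
    define t where "t n = inner (zs n - y) (us n) - inner (zs n - p) (D p)
       - inner (p - y) (D (zs n)) - inner (zs n - y) v" for n
    have st: "0 \<le> t n" for n
    proof -
      have "0 \<le> inner (zs n - y) ((us n - D (zs n)) - v)"
        using monA gr[of n] vy unfolding monotone_op_def by blast
      also have "\<dots> = inner (zs n - y) (us n) - inner (zs n - p) (D (zs n) - D p)
          - inner (zs n - p) (D p) - inner (p - y) (D (zs n)) - inner (zs n - y) v"
        by (simp add: inner_simps)
      also have "\<dots> \<le> t n"
        using mD unfolding monotone_fun_def t_def by (smt (verit))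
      finally show ?thesis .
    qed
    have l1: "(\<lambda>n. inner (zs n - y) (us n)) \<longlonglongrightarrow> 0"
      by (rule inner_null[where M="M + norm y"]) (use bd us in \<open>auto intro: order_trans[OF norm_triangle_ineq4] add_right_mono\<close>)
    have l2: "(\<lambda>n. inner (zs n - p) (D p)) \<longlonglongrightarrow> inner p (D p) - inner p (D p)"
      unfolding inner_diff_left by (intro tendsto_intros wc_inner[OF wp])
    have l3: "(\<lambda>n. inner (p - y) (D (zs n))) \<longlonglongrightarrow> inner (p - y) d"
      by (rule wc_inner'[OF wd])
    have l4: "(\<lambda>n. inner (zs n - y) v) \<longlonglongrightarrow> inner p v - inner y v"
      unfolding inner_diff_left by (intro tendsto_intros wc_inner[OF wp])
    have "t \<longlonglongrightarrow> 0 - (inner p (D p) - inner p (D p)) - inner (p - y) d - (inner p v - inner y v)"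
      unfolding t_def[abs_def] by (intro tendsto_intros l1 l2 l3 l4)
    then have "0 \<le> 0 - (inner p (D p) - inner p (D p)) - inner (p - y) d - (inner p v - inner y v)"
      using st by (intro Lim_bounded2[of t _ 0]) auto
    then show ?thesis by (simp add: inner_simps)
  qed
  have md: "- d \<in> A p"
  proof -
    define A' where "A' x = (if x = p then insert (- d) (A x) else A x)" for x
    have "monotone_op A'"
      unfolding monotone_op_def
    proof (intro allI impI)
      fix x y u v assume u: "u \<in> A' x" and v: "v \<in> A' y"
      show "0 \<le> inner (x - y) (u - v)"
      proof (cases "x = p \<and> u = - d")
        case True
        show ?thesis
        proof (cases "y = p \<and> v = - d")
          case True with \<open>x = p \<and> u = - d\<close> show ?thesis by simp
        next
          case False
          then have "v \<in> A y" using v by (auto simp: A'_def split: if_splits)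
          then show ?thesis using K1 True by simp
        qed
      next
        case False
        then have uA: "u \<in> A x" using u by (auto simp: A'_def split: if_splits)
        show ?thesis
        proof (cases "y = p \<and> v = - d")
          case True
          have "0 \<le> inner (p - x) (- d - u)" using K1[OF uA] .
          also have "inner (p - x) (- d - u) = inner (x - p) (u - (- d))"
            by (simp add: inner_simps)
          finally show ?thesis using True by simp
        next
          case False
          then have "v \<in> A y" using v by (auto simp: A'_def split: if_splits)
          then show ?thesis using monA uA unfolding monotone_op_def by blast
        qed
      qed
    qed
    moreover have "\<forall>x. A x \<subseteq> A' x" by (auto simp: A'_def)
    ultimately have "A' = A" using maxA unfolding maximally_monotone_def by blast
    then have "A' p = A p" by simp
    then show ?thesis unfolding A'_def by (metis insertI1)
  qed
  have K2: "inner (p - y) (d - D y) \<ge> 0" for y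
  proof -
    define r where "r n = inner (zs n - p) (us n) + inner (zs n - p) (d - D y)
        + inner (p - y) (D (zs n) - D y)" for n
    have sr: "0 \<le> r n" for n
    proof -
      have a1: "0 \<le> inner (zs n - p) ((us n - D (zs n)) - (- d))"
        using monA gr[of n] md unfolding monotone_op_def by blast
      have a2: "0 \<le> inner (zs n - y) (D (zs n) - D y)"
        using mD unfolding monotone_fun_def by blast
      have e1: "inner (zs n - y) (D (zs n) - D y) = inner (zs n - p) (D (zs n) - d)
          + inner (zs n - p) (d - D y) + inner (p - y) (D (zs n) - D y)"
        by (simp add: inner_simps)
      have e2: "inner (zs n - p) ((us n - D (zs n)) - (- d)) = inner (zs n - p) (us n) - inner (zs n - p) (D (zs n) - d)"
        by (simp add: inner_simps)
      show ?thesis using a1 a2 e1 e2 unfolding r_def by linarith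
    qed
    have l1: "(\<lambda>n. inner (zs n - p) (us n)) \<longlonglongrightarrow> 0"
      by (rule inner_null[where M="M + norm p"]) (use bd us in \<open>auto intro: order_trans[OF norm_triangle_ineq4] add_right_mono\<close>)
    have l2: "(\<lambda>n. inner (zs n - p) (d - D y)) \<longlonglongrightarrow> inner p (d - D y) - inner p (d - D y)"
      unfolding inner_diff_left by (intro tendsto_intros wc_inner[OF wp])
    have l3: "(\<lambda>n. inner (p - y) (D (zs n) - D y)) \<longlonglongrightarrow> inner (p - y) d - inner (p - y) (D y)"
      unfolding inner_diff_right by (intro tendsto_intros wc_inner'[OF wd])
    have "r \<longlonglongrightarrow> 0 + (inner p (d - D y) - inner p (d - D y)) + (inner (p - y) d - inner (p - y) (D y))"
      unfolding r_def[abs_def] by (intro tendsto_intros l1 l2 l3)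
    then have "0 \<le> 0 + (inner p (d - D y) - inner p (d - D y)) + (inner (p - y) d - inner (p - y) (D y))"
      using sr by (intro Lim_bounded2[of r _ 0]) auto
    then show ?thesis by (simp add: inner_simps)
  qed
  have dD: "d = D p"
  proof -
    define w where "w = D p - d"
    define t where "t = 1 / (LD + 1)"
    have t0: "0 < t" using LD by (simp add: t_def)
    have "0 \<le> inner (p - (p - t *\<^sub>R w)) (d - D (p - t *\<^sub>R w))" by (rule K2)
    hence "0 \<le> t * inner w (d - D (p - t *\<^sub>R w))" by simp
    hence h1: "0 \<le> inner w (d - D (p - t *\<^sub>R w))" using t0 by (simp add: zero_le_mult_iff)
    have "- inner w (D (p - t *\<^sub>R w) - D p) \<le> norm w * norm (D (p - t *\<^sub>R w) - D p)"
      using Cauchy_Schwarz_ineq2 abs_le_iff by blast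
    also have "\<dots> \<le> norm w * (LD * norm (t *\<^sub>R w))"
      using lD[of "p - t *\<^sub>R w" p] by (simp add: mult_left_mono)
    also have "\<dots> = LD * t * (norm w)\<^sup>2" using t0 by (simp add: power2_eq_square)
    finally have h2: "- inner w (D (p - t *\<^sub>R w) - D p) \<le> LD * t * (norm w)\<^sup>2" .
    have "inner w (d - D p) = inner w (d - D (p - t *\<^sub>R w)) + inner w (D (p - t *\<^sub>R w) - D p)"
      by (simp add: inner_simps)
    moreover have "inner w (d - D p) = - (norm w)\<^sup>2"
      by (simp add: w_def power2_norm_eq_inner inner_simps inner_commute)
    ultimately have "(norm w)\<^sup>2 \<le> LD * t * (norm w)\<^sup>2" using h1 h2 by linarith
    then have "(norm w)\<^sup>2 * (1 - LD * t) \<le> 0" by (simp add: algebra_simps)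
    moreover have "1 - LD * t > 0" using LD by (simp add: t_def field_simps)
    ultimately have "(norm w)\<^sup>2 \<le> 0" by (simp add: mult_le_0_iff)
    then have "w = 0" by simp
    then show ?thesis by (simp add: w_def)
  qed
  show ?thesis using md dD by simp
qed



lemma abs_inner_bound:
  fixes v e w :: "'a::real_inner"
  assumes "norm e \<le> L * norm w" "0 \<le> L"
  shows "\<bar>inner v e\<bar> \<le> L/2 * ((norm v)\<^sup>2 + (norm w)\<^sup>2)"
proof -
  have "\<bar>inner v e\<bar> \<le> norm v * norm e" by (rule Cauchy_Schwarz_ineq2)
  also have "\<dots> \<le> norm v * (L * norm w)" using assms by (simp add: mult_left_mono)
  also have "\<dots> = L * (norm v * norm w)" by simp
  also have "\<dots> \<le> L * (1/2 * ((norm v)\<^sup>2 + (norm w)\<^sup>2))"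
  proof (rule mult_left_mono[OF _ assms(2)])
    have "0 \<le> (norm v - norm w)\<^sup>2" by simp
    thus "norm v * norm w \<le> 1/2 * ((norm v)\<^sup>2 + (norm w)\<^sup>2)"
      by (simp add: power2_eq_square algebra_simps)
  qed
  finally show ?thesis by simp
qed

locale frb =
  fixes A :: "'a::{real_inner,complete_space} \<Rightarrow> 'a set" and B C :: "'a \<Rightarrow> 'a"
    and y :: "nat \<Rightarrow> 'a" and a :: "nat \<Rightarrow> 'a" and lam L1 L2 :: real
  assumes maxA: "maximally_monotone A" and mB: "monotone_fun B"
    and lipB: "\<And>u v. norm (B u - B v) \<le> L1 * norm (u - v)" and L1: "0 \<le> L1"
    and coco: "\<And>u v. inner (u - v) (C u - C v) \<ge> (1/L2) * (norm (C u - C v))\<^sup>2" and L2: "0 < L2"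
    and lam: "0 < lam" and lamb: "lam * (4*L1 + L2) < 2"
    and aA: "\<And>j. a j \<in> A (y (Suc (Suc j)))"
    and rec: "\<And>j. y (Suc j) - (2*lam) *\<^sub>R B (y (Suc j)) + lam *\<^sub>R B (y j) - lam *\<^sub>R C (y (Suc j))
                 = y (Suc (Suc j)) + lam *\<^sub>R a j"
begin

lemma monA: "monotone_op A" using maxA by (simp add: maximally_monotone_def)

lemma monC: "inner (u - v) (C u - C v) \<ge> 0"
  using coco[of u v] L2 by (smt (verit) divide_nonneg_nonneg mult_nonneg_nonneg zero_le_power2 less_eq_real_def)

lemma lipC: "norm (C u - C v) \<le> L2 * norm (u - v)"
proof (cases "norm (C u - C v) = 0")
  case True then show ?thesis using L2 by simp
next
  case False
  then have c0: "norm (C u - C v) > 0" by simp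
  have "(1/L2) * (norm (C u - C v))\<^sup>2 \<le> norm (u - v) * norm (C u - C v)"
    using coco[of u v] Cauchy_Schwarz_ineq2[of "u - v" "C u - C v"] by linarith
  then have "(1/L2) * norm (C u - C v) * norm (C u - C v) \<le> norm (u - v) * norm (C u - C v)"
    by (simp add: power2_eq_square mult.assoc)
  then have "(1/L2) * norm (C u - C v) \<le> norm (u - v)"
    using c0 by (rule mult_right_le_imp_le)
  then show ?thesis using L2 by (simp add: field_simps)
qed

lemma fejer:
  assumes z: "z \<in> zeros3 A B C"
  shows "(\<lambda>j. y (Suc j) - y j) \<longlonglongrightarrow> 0" and "\<exists>M. \<forall>n. norm (y n) \<le> M"
    and "convergent (\<lambda>n. (norm (y n - z))\<^sup>2)"
proof -
  obtain az where az: "az \<in> A z" "az + B z + C z = 0" using z by (auto simp: zeros3_def)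
  define \<psi> where "\<psi> j = (1/2)*(norm (y (Suc j) - z))\<^sup>2 - lam * inner (y (Suc j) - z) (B (y (Suc j)) - B (y j))
      + lam*L1/2*(norm (y (Suc j) - y j))\<^sup>2" for j
  define \<epsilon> where "\<epsilon> = 1/2 - lam*L1 - lam*L2/4"
  have e0: "\<epsilon> > 0" using lamb unfolding \<epsilon>_def by (simp add: algebra_simps)
  have lL1: "lam * L1 \<le> 1/2"
  proof -
    have "0 < lam * L2" using lam L2 by simp
    moreover have "lam * (4*L1 + L2) = 4 * (lam * L1) + lam * L2" by (simp add: algebra_simps)
    ultimately show ?thesis using lamb by linarith
  qed
  have dec: "\<psi> (Suc j) \<le> \<psi> j - \<epsilon> * (norm (y (Suc (Suc j)) - y (Suc j)))\<^sup>2" for j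
  proof -
    have m1: "inner (y (Suc (Suc j)) - z) (a j - az) \<ge> 0"
      using monA aA[of j] az(1) unfolding monotone_op_def by blast
    have m2: "inner (y (Suc (Suc j)) - z) (B (y (Suc (Suc j))) - B z) \<ge> 0"
      using mB unfolding monotone_fun_def by blast
    show ?thesis
      using key_ineq[OF m1 rec[of j] az(2) m2 lipB[of "y (Suc j)" "y j"] coco[of "y (Suc j)" z] lam L2 L1]
      unfolding \<psi>_def \<epsilon>_def by simp
  qed
  have low: "\<psi> j \<ge> 1/4 * (norm (y (Suc j) - z))\<^sup>2" for j
  proof -
    have "\<bar>inner (y (Suc j) - z) (B (y (Suc j)) - B (y j))\<bar>
        \<le> L1/2 * ((norm (y (Suc j) - z))\<^sup>2 + (norm (y (Suc j) - y j))\<^sup>2)"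
      by (rule abs_inner_bound[OF lipB L1])
    then have "lam * inner (y (Suc j) - z) (B (y (Suc j)) - B (y j))
        \<le> lam * (L1/2 * ((norm (y (Suc j) - z))\<^sup>2 + (norm (y (Suc j) - y j))\<^sup>2))"
      using lam by (intro mult_left_mono) auto
    moreover have "lam * L1 * (norm (y (Suc j) - z))\<^sup>2 \<le> 1/2 * (norm (y (Suc j) - z))\<^sup>2"
      using lL1 by (intro mult_right_mono) auto
    ultimately show ?thesis unfolding \<psi>_def by (simp add: algebra_simps)
  qed
  have p0: "\<psi> j \<ge> 0" for j
  proof -
    have "0 \<le> 1/4 * (norm (y (Suc j) - z))\<^sup>2" by simp
    then show ?thesis using low[of j] by linarith
  qed
  have decs: "decseq \<psi>"
  proof (rule decseq_SucI)
    fix j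
    have "0 \<le> \<epsilon> * (norm (y (Suc (Suc j)) - y (Suc j)))\<^sup>2" using e0 by simp
    then show "\<psi> (Suc j) \<le> \<psi> j" using dec[of j] by linarith
  qed
  obtain L\<psi> where L\<psi>: "\<psi> \<longlonglongrightarrow> L\<psi>" using decseq_convergent[OF decs, of 0] p0 by blast
  have dd: "(\<lambda>j. \<psi> j - \<psi> (Suc j)) \<longlonglongrightarrow> 0"
    using tendsto_diff[OF L\<psi> LIMSEQ_Suc[OF L\<psi>]] by simp
  have sq0: "(\<lambda>j. (norm (y (Suc (Suc j)) - y (Suc j)))\<^sup>2) \<longlonglongrightarrow> 0"
  proof (rule Lim_null_comparison)
    show "\<forall>\<^sub>F j in sequentially. norm ((norm (y (Suc (Suc j)) - y (Suc j)))\<^sup>2) \<le> (\<psi> j - \<psi> (Suc j)) / \<epsilon>"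
    proof (intro always_eventually allI)
      fix j
      have "\<epsilon> * (norm (y (Suc (Suc j)) - y (Suc j)))\<^sup>2 \<le> \<psi> j - \<psi> (Suc j)" using dec[of j] by linarith
      then show "norm ((norm (y (Suc (Suc j)) - y (Suc j)))\<^sup>2) \<le> (\<psi> j - \<psi> (Suc j)) / \<epsilon>"
        using e0 by (simp add: pos_le_divide_eq mult.commute)
    qed
    show "(\<lambda>j. (\<psi> j - \<psi> (Suc j)) / \<epsilon>) \<longlonglongrightarrow> 0"
      using tendsto_divide[OF dd tendsto_const, of \<epsilon>] e0 by simp
  qed
  have n0: "(\<lambda>j. norm (y (Suc (Suc j)) - y (Suc j))) \<longlonglongrightarrow> 0"
    using tendsto_real_sqrt[OF sq0] by simp
  show d0: "(\<lambda>j. y (Suc j) - y j) \<longlonglongrightarrow> 0"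
    by (rule LIMSEQ_imp_Suc) (use n0 tendsto_norm_zero_iff in blast)
  define R where "R = sqrt (4 * \<psi> 0)"
  have bz: "norm (y (Suc j) - z) \<le> R" for j
  proof -
    have "\<psi> j \<le> \<psi> 0" using decs by (simp add: decseq_def)
    then have "(norm (y (Suc j) - z))\<^sup>2 \<le> 4 * \<psi> 0" using low[of j] by simp
    then show ?thesis unfolding R_def by (rule real_le_rsqrt)
  qed
  show "\<exists>M. \<forall>n. norm (y n) \<le> M"
  proof (intro exI allI)
    fix n show "norm (y n) \<le> norm (y 0) + norm z + R"
    proof (cases n)
      case 0
      have "0 \<le> R" using bz[of 0] norm_ge_zero order_trans by blast
      moreover have "0 \<le> norm z" by simp
      ultimately show ?thesis using 0 by simp
    next
      case (Suc j)
      have "norm (y (Suc j)) \<le> norm z + norm (y (Suc j) - z)" by (rule norm_triangle_sub)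
      moreover have "0 \<le> norm (y 0)" by simp
      ultimately show ?thesis unfolding Suc using bz[of j] by linarith
    qed
  qed
  have w0: "(\<lambda>j. y (Suc j) - y j) \<longlonglongrightarrow> 0" by (rule d0)
  have e0': "(\<lambda>j. B (y (Suc j)) - B (y j)) \<longlonglongrightarrow> 0"
  proof (rule Lim_null_comparison)
    show "\<forall>\<^sub>F j in sequentially. norm (B (y (Suc j)) - B (y j)) \<le> L1 * norm (y (Suc j) - y j)"
      using lipB by (intro always_eventually allI) 
    show "(\<lambda>j. L1 * norm (y (Suc j) - y j)) \<longlonglongrightarrow> 0"
      using tendsto_mult_right_zero[OF tendsto_norm_zero[OF w0]] by simp
  qed
  have i0: "(\<lambda>j. inner (y (Suc j) - z) (B (y (Suc j)) - B (y j))) \<longlonglongrightarrow> 0"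
    by (rule inner_null[OF bz e0'])
  have wn0: "(\<lambda>j. (norm (y (Suc j) - y j))\<^sup>2) \<longlonglongrightarrow> 0"
    using tendsto_power[OF tendsto_norm_zero[OF w0], of 2] by simp
  have eq: "(norm (y (Suc j) - z))\<^sup>2 = 2 * \<psi> j + 2 * lam * inner (y (Suc j) - z) (B (y (Suc j)) - B (y j))
      - lam * L1 * (norm (y (Suc j) - y j))\<^sup>2" for j
    unfolding \<psi>_def by (simp add: algebra_simps)
  have "(\<lambda>j. (norm (y (Suc j) - z))\<^sup>2) \<longlonglongrightarrow> 2 * L\<psi> + 2 * lam * 0 - lam * L1 * 0"
    unfolding eq by (intro tendsto_intros L\<psi> i0 wn0)
  then have "(\<lambda>j. (norm (y j - z))\<^sup>2) \<longlonglongrightarrow> 2 * L\<psi> + 2 * lam * 0 - lam * L1 * 0"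
    by (rule LIMSEQ_imp_Suc)
  then show "convergent (\<lambda>n. (norm (y n - z))\<^sup>2)" by (auto simp: convergent_def)
qed

end



lemma solve_half:
  fixes X Y P Q I :: real
  assumes "X - Y = P - Q - 2 * I"
  shows "I = (P - Q - (X - Y)) / 2"
proof -
  have "2 * I = P - Q - (X - Y)" using assms by linarith
  then show ?thesis by simp
qed

context frb
begin

lemma cluster:
  fixes s :: "nat \<Rightarrow> nat"
  assumes F: "zeros3 A B C \<noteq> {}" and s: "strict_mono s"
  shows "\<exists>t p. strict_mono t \<and> p \<in> zeros3 A B C \<and> weakly_converges (y \<circ> s \<circ> t) p"
proof -
  obtain z where z: "z \<in> zeros3 A B C" using F by blast
  have d0: "(\<lambda>j. y (Suc j) - y j) \<longlonglongrightarrow> 0" by (rule fejer(1)[OF z])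
  obtain M where M: "\<And>n. norm (y n) \<le> M" using fejer(2)[OF z] by blast
  define D where "D x = B x + C x" for x
  have mD: "monotone_fun D"
    unfolding monotone_fun_def
  proof (intro allI)
    fix u v
    have "inner (u - v) (D u - D v) = inner (u - v) (B u - B v) + inner (u - v) (C u - C v)"
      by (simp add: D_def inner_simps)
    then show "0 \<le> inner (u - v) (D u - D v)"
      using mB monC[of u v] unfolding monotone_fun_def by (smt (verit))
  qed
  have lD: "norm (D u - D v) \<le> (L1 + L2) * norm (u - v)" for u v
  proof -
    have "D u - D v = (B u - B v) + (C u - C v)" by (simp add: D_def)
    then have "norm (D u - D v) \<le> norm (B u - B v) + norm (C u - C v)"
      by (simp add: norm_triangle_ineq)
    then show ?thesis using lipB[of u v] lipC[of u v] by (simp add: algebra_simps)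
  qed
  define u where "u j = a j + D (y (Suc (Suc j)))" for j
  have ueq: "u j = (1/lam) *\<^sub>R (y (Suc j) - y (Suc (Suc j))) + (B (y (Suc (Suc j))) - B (y (Suc j)))
      - (B (y (Suc j)) - B (y j)) + (C (y (Suc (Suc j))) - C (y (Suc j)))" for j
  proof -
    have la: "lam *\<^sub>R a j = y (Suc j) - (2*lam) *\<^sub>R B (y (Suc j)) + lam *\<^sub>R B (y j) - lam *\<^sub>R C (y (Suc j)) - y (Suc (Suc j))"
      using rec[of j] by (simp add: algebra_simps)
    have t: "(2*lam) *\<^sub>R B (y (Suc j)) = lam *\<^sub>R B (y (Suc j)) + lam *\<^sub>R B (y (Suc j))"
      by (metis mult.commute scaleR_2 scaleR_scaleR scaleR_right_distrib)
    have "lam *\<^sub>R u j = lam *\<^sub>R ((1/lam) *\<^sub>R (y (Suc j) - y (Suc (Suc j))) + (B (y (Suc (Suc j))) - B (y (Suc j)))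
      - (B (y (Suc j)) - B (y j)) + (C (y (Suc (Suc j))) - C (y (Suc j))))"
      unfolding u_def D_def scaleR_add_right la t using lam by (simp add: algebra_simps)
    then show ?thesis using lam by simp
  qed
  define dd where "dd j = norm (y (Suc j) - y j)" for j
  have dd0: "dd \<longlonglongrightarrow> 0" unfolding dd_def using tendsto_norm_zero[OF d0] by simp
  have ub: "norm (u j) \<le> (1/lam + L1 + L2) * dd (Suc j) + L1 * dd j" for j
  proof -
    have "norm (u j) \<le> norm ((1/lam) *\<^sub>R (y (Suc j) - y (Suc (Suc j)))) + norm (B (y (Suc (Suc j))) - B (y (Suc j)))
      + norm (B (y (Suc j)) - B (y j)) + norm (C (y (Suc (Suc j))) - C (y (Suc j)))"
      unfolding ueq by (smt (verit) norm_triangle_ineq norm_triangle_ineq4)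
    also have "\<dots> \<le> (1/lam) * dd (Suc j) + L1 * dd (Suc j) + L1 * dd j + L2 * dd (Suc j)"
      using lipB[of "y (Suc (Suc j))" "y (Suc j)"] lipB[of "y (Suc j)" "y j"] lipC[of "y (Suc (Suc j))" "y (Suc j)"] lam
      by (simp add: dd_def norm_minus_commute)
    finally show ?thesis by (simp add: algebra_simps)
  qed
  have u0: "u \<longlonglongrightarrow> 0"
  proof (rule Lim_null_comparison)
    show "\<forall>\<^sub>F j in sequentially. norm (u j) \<le> (1/lam + L1 + L2) * dd (Suc j) + L1 * dd j"
      using ub by (intro always_eventually allI)
    show "(\<lambda>j. (1/lam + L1 + L2) * dd (Suc j) + L1 * dd j) \<longlonglongrightarrow> 0"
      using tendsto_add[OF tendsto_mult_right_zero[OF LIMSEQ_Suc[OF dd0]] tendsto_mult_right_zero[OF dd0]]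
      by simp
  qed
  define idx where "idx n = s (n + 2) - 2" for n
  have sge: "n \<le> s n" for n using seq_suble[OF s] .
  have idxs: "Suc (Suc (idx n)) = s (n + 2)" for n
    using sge[of "n+2"] by (simp add: idx_def)
  have idxm: "strict_mono idx"
    unfolding strict_mono_def
  proof (intro allI impI)
    fix m n :: nat assume "m < n"
    then have "s (m + 2) < s (n + 2)" using s by (simp add: strict_mono_def)
    then show "idx m < idx n" using sge[of "m+2"] by (simp add: idx_def)
  qed
  define zs where "zs n = y (s (n + 2))" for n
  define us where "us n = u (idx n)" for n
  have us0: "us \<longlonglongrightarrow> 0" unfolding us_def[abs_def] using LIMSEQ_subseq_LIMSEQ[OF u0 idxm] by (simp add: o_def)
  have gr: "us n - D (zs n) \<in> A (zs n)" for n
    using aA[of "idx n"] by (simp add: us_def u_def zs_def idxs)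
  have zb: "norm (zs n) \<le> M" for n by (simp add: zs_def M)
  obtain t1 p where t1: "strict_mono t1" and wp1: "weakly_converges (zs \<circ> t1) p"
    using weak_compact[of zs M] zb by blast
  have Db: "norm (D ((zs \<circ> t1) n)) \<le> norm (D 0) + (L1 + L2) * M" for n
  proof -
    have "norm (D ((zs \<circ> t1) n)) \<le> norm (D 0) + norm (D ((zs \<circ> t1) n) - D 0)"
      by (rule norm_triangle_sub)
    also have "norm (D ((zs \<circ> t1) n) - D 0) \<le> (L1 + L2) * norm ((zs \<circ> t1) n)"
      using lD[of "(zs \<circ> t1) n" 0] by simp
    also have "\<dots> \<le> (L1 + L2) * M" using zb L1 L2 by (intro mult_left_mono) auto
    finally show ?thesis by simp
  qed
  obtain t2 d where t2: "strict_mono t2" and wd2: "weakly_converges ((\<lambda>n. D ((zs \<circ> t1) n)) \<circ> t2) d"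
    using weak_compact[of "\<lambda>n. D ((zs \<circ> t1) n)" "norm (D 0) + (L1 + L2) * M"] Db by blast
  define t where "t = t1 \<circ> t2"
  have tm: "strict_mono t" unfolding t_def using t1 t2 by (rule strict_mono_o)
  have wp: "weakly_converges (zs \<circ> t) p"
    using weakly_converges_subseq[OF wp1 t2] by (simp add: t_def o_assoc)
  have wd: "weakly_converges (\<lambda>n. D ((zs \<circ> t) n)) d"
    using wd2 by (simp add: t_def o_def)
  have "- D p \<in> A p"
  proof (rule demiclosed[OF maxA mD lD _ _ _ _ wp wd])
    show "0 \<le> L1 + L2" using L1 L2 by simp
    show "\<And>n. (us \<circ> t) n - D ((zs \<circ> t) n) \<in> A ((zs \<circ> t) n)" using gr by simp
    show "(us \<circ> t) \<longlonglongrightarrow> 0" by (rule LIMSEQ_subseq_LIMSEQ[OF us0 tm])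
    show "\<And>n. norm ((zs \<circ> t) n) \<le> M" using zb by simp
  qed
  then have pz: "p \<in> zeros3 A B C"
    unfolding zeros3_def D_def by (intro CollectI bexI[of _ "- (B p + C p)"]) auto
  define t' where "t' n = t n + 2" for n
  have t'm: "strict_mono t'" using tm by (simp add: strict_mono_def t'_def)
  have "y \<circ> s \<circ> t' = zs \<circ> t" by (simp add: fun_eq_iff t'_def zs_def)
  then show ?thesis using t'm pz wp by metis
qed

lemma weak_conv:
  assumes F: "zeros3 A B C \<noteq> {}"
  shows "\<exists>p\<in>zeros3 A B C. weakly_converges y p"
proof -
  obtain t0 p where t0: "strict_mono t0" and pF: "p \<in> zeros3 A B C" and wp: "weakly_converges (y \<circ> t0) p"
    using cluster[OF F, of id] by (auto simp: strict_mono_def)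
  have "weakly_converges y p"
    unfolding weakly_converges_def
  proof
    fix c
    show "(\<lambda>n. inner (y n) c) \<longlonglongrightarrow> inner p c"
    proof (rule ccontr)
      assume nc: "\<not> (\<lambda>n. inner (y n) c) \<longlonglongrightarrow> inner p c"
      then obtain e where e: "e > 0" and ne: "\<not> eventually (\<lambda>n. dist (inner (y n) c) (inner p c) < e) sequentially"
        unfolding tendsto_iff by blast
      obtain s :: "nat \<Rightarrow> nat" where s: "strict_mono s" and sf: "\<And>n. \<not> dist (inner (y (s n)) c) (inner p c) < e"
        using not_eventually_sequentiallyD[OF ne] by auto
      obtain t q where t: "strict_mono t" and qF: "q \<in> zeros3 A B C" and wq: "weakly_converges (y \<circ> s \<circ> t) q"
        using cluster[OF F s] by blast
      have "(\<lambda>n. dist (inner ((y \<circ> s \<circ> t) n) c) (inner p c)) \<longlonglongrightarrow> dist (inner q c) (inner p c)"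
        by (intro tendsto_intros wc_inner[OF wq])
      then have "e \<le> dist (inner q c) (inner p c)"
        using sf by (intro Lim_bounded2[where N=0]) (auto simp: not_less)
      then have qp: "q \<noteq> p" using e by auto
      obtain Gp where Gp: "(\<lambda>n. (norm (y n - p))\<^sup>2) \<longlonglongrightarrow> Gp" using fejer(3)[OF pF] by (auto simp: convergent_def)
      obtain Gq where Gq: "(\<lambda>n. (norm (y n - q))\<^sup>2) \<longlonglongrightarrow> Gq" using fejer(3)[OF qF] by (auto simp: convergent_def)
      have eq: "inner (y n) (p - q) = ((norm p)\<^sup>2 - (norm q)\<^sup>2 - ((norm (y n - p))\<^sup>2 - (norm (y n - q))\<^sup>2)) / 2" for n
      proof -
        have "(norm (y n - p))\<^sup>2 - (norm (y n - q))\<^sup>2 = (norm p)\<^sup>2 - (norm q)\<^sup>2 - 2 * inner (y n) (p - q)"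
          by (simp add: power2_norm_eq_inner inner_simps inner_commute algebra_simps)
        then show ?thesis by (rule solve_half)
      qed
      define G where "G = ((norm p)\<^sup>2 - (norm q)\<^sup>2 - (Gp - Gq)) / 2"
      have hG: "(\<lambda>n. inner (y n) (p - q)) \<longlonglongrightarrow> G"
        unfolding eq G_def by (intro tendsto_intros Gp Gq) simp
      have "(\<lambda>n. inner ((y \<circ> t0) n) (p - q)) \<longlonglongrightarrow> G"
        using LIMSEQ_subseq_LIMSEQ[OF hG t0] by (simp add: o_def)
      moreover have "(\<lambda>n. inner ((y \<circ> t0) n) (p - q)) \<longlonglongrightarrow> inner p (p - q)" by (rule wc_inner[OF wp])
      ultimately have g1: "G = inner p (p - q)" using LIMSEQ_unique by blast
      have st: "strict_mono (s \<circ> t)" using s t by (rule strict_mono_o)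
      have "(\<lambda>n. inner ((y \<circ> s \<circ> t) n) (p - q)) \<longlonglongrightarrow> G"
        using LIMSEQ_subseq_LIMSEQ[OF hG st] by (simp add: o_def)
      moreover have "(\<lambda>n. inner ((y \<circ> s \<circ> t) n) (p - q)) \<longlonglongrightarrow> inner q (p - q)" by (rule wc_inner[OF wq])
      ultimately have g2: "G = inner q (p - q)" using LIMSEQ_unique by blast
      have "inner (p - q) (p - q) = 0" using g1 g2 by (simp add: inner_diff_left)
      then show False using qp by simp
    qed
  qed
  then show ?thesis using pF by blast
qed

end

theorem theorem5p2:
  fixes A :: "'a::{real_inner, complete_space} \<Rightarrow> 'a set"
    and B C :: "'a \<Rightarrow> 'a"
    and L1 L2 lam :: real
    and x :: "int \<Rightarrow> 'a"
  assumes "maximally_monotone A"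
    and "monotone_fun B" and "L1-lipschitz_on UNIV B"
    and "cocoercive L2 C"
    and "zeros3 A B C \<noteq> {}"
    and "0 < lam" and "lam < 2 / (4 * L1 + L2)"
    and "\<And>k::nat. x (int k + 1) \<in> resolvent lam A
           (x (int k) - (2 * lam) *\<^sub>R B (x (int k)) + lam *\<^sub>R B (x (int k - 1))
              - lam *\<^sub>R C (x (int k)))"
  shows "\<exists>p \<in> zeros3 A B C. weakly_converges (\<lambda>n. x (int n)) p"
proof -
  define y where "y n = x (int n)" for n
  have L1: "0 \<le> L1" using assms(3) by (rule lipschitz_on_nonneg)
  have lipB: "norm (B u - B v) \<le> L1 * norm (u - v)" for u v
    using lipschitz_onD[OF assms(3), of u v] by (simp add: dist_norm)
  have L2: "0 < L2" and coco: "\<And>u v. inner (u - v) (C u - C v) \<ge> (1/L2) * (norm (C u - C v))\<^sup>2"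
    using assms(4) unfolding cocoercive_def by auto
  have lamb: "lam * (4*L1 + L2) < 2"
  proof -
    have "0 < 4*L1 + L2" using L1 L2 by simp
    then show ?thesis using assms(7) by (simp add: pos_less_divide_eq mult.commute)
  qed
  have "\<forall>j. \<exists>b. b \<in> A (y (Suc (Suc j))) \<and>
      y (Suc j) - (2*lam) *\<^sub>R B (y (Suc j)) + lam *\<^sub>R B (y j) - lam *\<^sub>R C (y (Suc j))
                 = y (Suc (Suc j)) + lam *\<^sub>R b"
  proof
    fix j
    have "x (int (Suc j) + 1) \<in> resolvent lam A
           (x (int (Suc j)) - (2 * lam) *\<^sub>R B (x (int (Suc j))) + lam *\<^sub>R B (x (int (Suc j) - 1))
              - lam *\<^sub>R C (x (int (Suc j))))" by (rule assms(8))
    moreover have "int (Suc j) + 1 = int (Suc (Suc j))" "int (Suc j) - 1 = int j" by simp_all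
    ultimately show "\<exists>b. b \<in> A (y (Suc (Suc j))) \<and>
      y (Suc j) - (2*lam) *\<^sub>R B (y (Suc j)) + lam *\<^sub>R B (y j) - lam *\<^sub>R C (y (Suc j))
                 = y (Suc (Suc j)) + lam *\<^sub>R b"
      unfolding resolvent_def y_def by auto
  qed
  then obtain a where aA: "\<And>j. a j \<in> A (y (Suc (Suc j)))"
    and rec: "\<And>j. y (Suc j) - (2*lam) *\<^sub>R B (y (Suc j)) + lam *\<^sub>R B (y j) - lam *\<^sub>R C (y (Suc j))
                 = y (Suc (Suc j)) + lam *\<^sub>R a j"
    by metis
  interpret frb A B C y a lam L1 L2
    by (unfold_locales) (use assms(1,2) lipB L1 coco L2 assms(6) lamb aA rec in auto)
  have "\<exists>p\<in>zeros3 A B C. weakly_converges y p" by (rule weak_conv[OF assms(5)])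
  then show ?thesis by (simp add: y_def[abs_def])
qed


end
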